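(* Let $0\le k<d$ and let $L(X)\in\mathbb F_{q^2}[X]$ satisfy $L(0)\neq0$, $\deg L=t<(q+1)/d$, and $L$ has no root in $A_k$. (i) If there exist an integer $0\le\tau<(q+1)/d$ and $\lambda\in\mu_{q+1}$ such that $\tilde L(x)/L(x)=\lambda x^\tau$ for all $x\in A_k$, then either $\tau=0$ or $(q+1)/d-t\le\tau\le t$. (ii) For $\lambda\in\mu_{q+1}$: $\tilde L(x)/L(x)=\lambda$ for all $x\in A_k$ if and only if $\tilde L(X)=\lambda L(X)$. (iii) For $\lambda\in\mu_{q+1}$ and an integer $\tau$ with $(q+1)/d-t\le\tau\le t$: $\tilde L(x)/L(x)=\lambda x^\tau$ for all $x\in A_k$ if and only if $L(X)=P(X)+X^{(q+1)/d-\tau}Q(X)$ for some $P,Q\in\mathbb F_{q^2}[X]$ with $\deg P=t-\tau$, $\tilde P=\lambda P$, $\deg Q=\tau+t-(q+1)/d$ and $\tilde Q=\lambda\epsilon^kQ$.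
   Context: $q$ is a prime power, $d$ is a positive divisor of $q+1$, and $\epsilon\in\mathbb F_{q^2}^*$ has multiplicative order $d$. $\mu_m$ denotes the subgroup of order $m$ of $\mathbb F_{q^2}^*$. For $0\le k<d$, $A_k=\{x\in\mu_{q+1}: x^{(q+1)/d}=\epsilon^k\}$. For $a\in\mathbb F_{q^2}$, $\bar a=a^q$. For $f(X)=\sum_{i=0}^n a_iX^i\in\mathbb F_{q^2}[X]$ with $a_n\neq0$, $\bar f(X)=\sum_{i=0}^n\bar a_iX^i$ and $\tilde f(X)=X^n\bar f(X^{-1})=\sum_{i=0}^n\bar a_iX^{n-i}$. *)

theory Defs
  imports "HOL-Computational_Algebra.Computational_Algebra" "HOL-Library.Cardinality"
begin

definition qbar :: "nat \<Rightarrow> 'a::field \<Rightarrow> 'a" where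
  "qbar q a = a ^ q"

text \<open>For f = sum a_i X^i of degree n: tilde f = X^n fbar(1/X) = sum conj(a_i) X^(n-i).\<close>
definition qtilde :: "nat \<Rightarrow> 'a::field poly \<Rightarrow> 'a poly" where
  "qtilde q f = (\<Sum>i\<le>degree f. monom (qbar q (coeff f i)) (degree f - i))"

definition mu :: "nat \<Rightarrow> 'a::field set" where
  "mu m = {x. x ^ m = 1}"

definition Aset :: "nat \<Rightarrow> nat \<Rightarrow> 'a::field \<Rightarrow> nat \<Rightarrow> 'a set" where
  "Aset q d eps k = {x \<in> mu (q + 1). x ^ ((q + 1) div d) = eps ^ k}"

end

theory Submission imports Defs begin

lemma of_nat_card_zero: "of_nat CARD('a::{field,finite}) = (0::'a)"
proof -
  have "(\<Sum>x\<in>(UNIV::'a set). x + 1) = (\<Sum>x\<in>UNIV. x)"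
    by (rule sum.reindex_bij_witness[of _ "\<lambda>y. y - 1" "\<lambda>y. y + 1"]) auto
  hence "(\<Sum>x\<in>(UNIV::'a set). x) + of_nat CARD('a) = (\<Sum>x\<in>UNIV. x)"
    by (simp add: sum.distrib)
  thus ?thesis by simp
qed

lemma pow_card_same: "(x::'a::{field,finite}) ^ CARD('a) = x"
proof (cases "x = 0")
  case False
  have "x * (\<Prod>y\<in>UNIV-{0}. x * y) = x * x ^ (card (UNIV :: 'a set) - 1) * \<Prod>(UNIV-{0})"
    by (simp add: prod.distrib mult_ac)
  also have "x * x ^ (card (UNIV :: 'a set) - 1) = x ^ Suc (card (UNIV :: 'a set) - 1)"
    by (subst power_Suc) auto
  also have "Suc (card (UNIV :: 'a set) - 1) = card (UNIV :: 'a set)"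
    using finite_UNIV_card_ge_0[where ?'a = 'a] by simp
  also have "(\<Prod>y\<in>UNIV-{0}. x * y) = (\<Prod>y\<in>UNIV-{0}. y)"
    by (rule prod.reindex_bij_witness[of _ "\<lambda>y. y / x" "\<lambda>y. x * y"]) (use False in auto)
  finally show ?thesis
    by simp
qed (use finite_UNIV_card_ge_0[where ?'a = 'a] in auto)

lemma char_eq:
  assumes "prime p" "n > 0" "q = p ^ n" "CARD('a::{field,finite}) = q ^ 2"
  shows "CHAR('a) = p"
proof -
  have pos: "CHAR('a) > 0" by (rule finite_imp_CHAR_pos) simp
  hence pr: "prime CHAR('a)" using prime_CHAR_semidom by blast
  have "CHAR('a) dvd CARD('a)" using of_nat_card_zero[where 'a='a] of_nat_eq_0_iff_char_dvd by blast
  hence "CHAR('a) dvd p ^ (n*2)" using assms by (simp add: power_mult)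
  hence "CHAR('a) dvd p" using pr prime_dvd_power by blast
  thus ?thesis using pr assms(1) by (simp add: primes_dvd_imp_eq)
qed

lemma frob_sum:
  assumes "prime p" "n > 0" "q = p ^ n" "CARD('a::{field,finite}) = q ^ 2"
  shows "(sum (f::'b\<Rightarrow>'a) A) ^ q = sum (\<lambda>i. f i ^ q) A"
  using char_eq[OF assms] assms by (intro freshmans_dream_sum') auto

lemma frob_add:
  assumes "prime p" "n > 0" "q = p ^ n" "CARD('a::{field,finite}) = q ^ 2"
  shows "((a::'a) + b) ^ q = a ^ q + b ^ q"
  using char_eq[OF assms] assms by (intro freshmans_dream') auto

lemma coeff_qtilde:
  "coeff (qtilde q f) j = (if j \<le> degree f then coeff f (degree f - j) ^ q else 0)"
proof -
  have "coeff (qtilde q f) j = (\<Sum>i\<le>degree f. if degree f - i = j then coeff f i ^ q else 0)"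
    by (simp add: qtilde_def coeff_sum coeff_monom qbar_def)
  also have "\<dots> = (\<Sum>i\<le>degree f. if i = degree f - j \<and> j \<le> degree f then coeff f i ^ q else 0)"
    by (rule sum.cong) auto
  also have "\<dots> = (if j \<le> degree f then coeff f (degree f - j) ^ q else 0)"
    by (cases "j \<le> degree f") (auto simp: sum.delta)
  finally show ?thesis .
qed

lemma degree_qtilde: "degree (qtilde q f) \<le> degree f"
  by (rule degree_le) (auto simp: coeff_qtilde)

lemma poly_qtilde:
  assumes "prime p" "n > 0" "q = p ^ n" "CARD('a::{field,finite}) = q ^ 2"
    and x: "(x::'a) ^ (q+1) = 1"
  shows "poly (qtilde q f) x = x ^ degree f * (poly f x) ^ q"
proof -
  have "poly (qtilde q f) x = (\<Sum>i\<le>degree f. coeff f i ^ q * x ^ (degree f - i))"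
    by (simp add: qtilde_def poly_sum poly_monom qbar_def)
  also have "\<dots> = (\<Sum>i\<le>degree f. x ^ degree f * (coeff f i * x ^ i) ^ q)"
  proof (rule sum.cong)
    fix i assume "i \<in> {..degree f}"
    hence "degree f = (degree f - i) + i" by simp
    hence "x ^ degree f * x ^ (i*q) = x ^ (degree f - i) * x ^ i * x ^ (i*q)"
      by (metis power_add)
    also have "\<dots> = x ^ (degree f - i) * x ^ (i * (q+1))"
      by (simp add: power_add algebra_simps)
    also have "\<dots> = x ^ (degree f - i) * (x ^ (q+1)) ^ i"
      by (simp only: power_mult[of x "q+1" i, symmetric] mult.commute[of "q+1" i])
    also have "\<dots> = x ^ (degree f - i)" using x by simp
    finally have E: "x ^ (degree f - i) = x ^ degree f * x ^ (i*q)" by simp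
    have F: "(coeff f i * x ^ i) ^ q = coeff f i ^ q * x ^ (i*q)"
      by (simp add: power_mult_distrib power_mult)
    show "coeff f i ^ q * x ^ (degree f - i) = x ^ degree f * (coeff f i * x ^ i) ^ q"
      unfolding F E by (simp add: algebra_simps)
  qed simp
  also have "\<dots> = x ^ degree f * (\<Sum>i\<le>degree f. (coeff f i * x ^ i) ^ q)"
    by (simp add: sum_distrib_left)
  also have "\<dots> = x ^ degree f * (poly f x) ^ q"
    by (simp add: poly_altdef frob_sum[OF assms(1-4)])
  finally show ?thesis .
qed


lemma fiber_full:
  fixes f :: "'a \<Rightarrow> 'b"
  assumes "finite S" "finite T" "f ` S \<subseteq> T" "card T \<le> a"
    and fib: "\<And>y. y \<in> T \<Longrightarrow> card {x\<in>S. f x = y} \<le> b"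
    and cS: "card S = a * b" and y: "y \<in> T"
  shows "card {x\<in>S. f x = y} = b"
proof -
  have s: "(\<Sum>y\<in>T. card {x\<in>S. f x = y}) = card S"
    using sum.group[OF assms(1,2,3), of "\<lambda>_. 1::nat"] by simp
  have "(\<Sum>y\<in>T. card {x\<in>S. f x = y}) + (\<Sum>y\<in>T. b - card {x\<in>S. f x = y}) = (\<Sum>y\<in>T. b)"
    by (subst sum.distrib[symmetric]) (rule sum.cong, auto simp: fib)
  hence "card S + (\<Sum>y\<in>T. b - card {x\<in>S. f x = y}) = card T * b" using s by simp
  moreover have "card T * b \<le> a * b" using assms(4) by simp
  ultimately have "(\<Sum>y\<in>T. b - card {x\<in>S. f x = y}) = 0" using cS by linarith
  hence "b - card {x\<in>S. f x = y} = 0" using assms(2) y by simp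
  thus ?thesis using fib[OF y] by simp
qed

lemma card_roots_le:
  fixes c :: "'a::{field}"
  assumes "m > 0"
  shows "card {x. x ^ m = c} \<le> m"
proof -
  let ?p = "monom 1 m - [:c:]"
  have cm: "coeff ?p m = 1" using assms by (cases m) auto
  have nz: "?p \<noteq> 0"
  proof
    assume "?p = 0"
    with cm show False by simp
  qed
  have "degree ?p \<le> m"
    by (rule order.trans[OF degree_diff_le_max]) (auto simp: degree_monom_le)
  moreover have "m \<le> degree ?p" using cm by (intro le_degree) simp
  ultimately have dg: "degree ?p = m" by simp
  have "{x. x ^ m = c} = {x. poly ?p x = 0}" by (auto simp: poly_monom)
  thus ?thesis using card_poly_roots_bound[OF nz] dg by simp
qed


lemma split_poly: "(L::'a::comm_semiring_1 poly) = poly_cutoff s L + monom 1 s * poly_shift s L"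
  by (rule poly_eqI) (auto simp: coeff_poly_cutoff coeff_monom_mult coeff_poly_shift)

theorem lemma2p1:
  fixes q d k t :: nat and eps :: "'a::{field,finite}" and L :: "'a poly"
  assumes q_pp: "\<exists>p n. prime p \<and> n > 0 \<and> q = p ^ n"
    and card: "CARD('a) = q ^ 2"
    and d_pos: "d > 0" and d_dvd: "d dvd q + 1"
    and eps_ord: "eps ^ d = 1" "\<forall>j. 0 < j \<and> j < d \<longrightarrow> eps ^ j \<noteq> 1"
    and k_lt: "k < d"
    and L0: "poly L 0 \<noteq> 0"
    and degL: "degree L = t" and t_lt: "t < (q + 1) div d"
    and noroot: "\<forall>x \<in> Aset q d eps k. poly L x \<noteq> 0"
  shows
    "(\<forall>(\<tau>::nat) lam. \<tau> < (q + 1) div d \<and> lam \<in> mu (q + 1) \<and>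
        (\<forall>x \<in> Aset q d eps k. poly (qtilde q L) x / poly L x = lam * x ^ \<tau>)
        \<longrightarrow> \<tau> = 0 \<or> ((q + 1) div d - t \<le> \<tau> \<and> \<tau> \<le> t))
   \<and> (\<forall>lam \<in> mu (q + 1).
        (\<forall>x \<in> Aset q d eps k. poly (qtilde q L) x / poly L x = lam)
        \<longleftrightarrow> qtilde q L = smult lam L)
   \<and> (\<forall>lam \<in> mu (q + 1). \<forall>\<tau>::nat. (q + 1) div d - t \<le> \<tau> \<and> \<tau> \<le> t \<longrightarrow>
        ((\<forall>x \<in> Aset q d eps k. poly (qtilde q L) x / poly L x = lam * x ^ \<tau>)
         \<longleftrightarrow> (\<exists>P Q. L = P + monom 1 ((q + 1) div d - \<tau>) * Q
               \<and> degree P = t - \<tau> \<and> qtilde q P = smult lam P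
               \<and> degree Q = \<tau> + t - (q + 1) div d
               \<and> qtilde q Q = smult (lam * eps ^ k) Q)))"
proof -
  obtain p n where pp: "prime p" "n > 0" "q = p ^ n" using q_pp by blast
  note fr = pp card
  define m where "m = (q + 1) div d"
  define A where "A = Aset q d eps k"
  have md: "d * m = q + 1" using d_dvd by (simp add: m_def)
  have tm: "t < m" using t_lt m_def by simp
  have m_pos: "m > 0" using tm by simp
  have q2: "q \<ge> 2"
  proof -
    have "p \<le> p ^ n" using prime_gt_1_nat[OF pp(1)] pp(2) by (intro self_le_power) auto
    thus ?thesis using pp prime_ge_2_nat by (metis order.trans)
  qed
  have Amem: "x ^ (q+1) = 1" "x ^ m = eps ^ k" if "x \<in> A" for x
    using that by (auto simp: A_def Aset_def mu_def m_def)
  have xnz: "x \<noteq> 0" if "x ^ (q+1) = (1::'a)" for x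
    using that by (cases "x = 0") auto
  have units: "x ^ (q^2 - 1) = 1" if "(x::'a) \<noteq> 0" for x
  proof -
    have "x ^ (q^2 - 1) * x = x ^ Suc (q^2 - 1)" by (simp add: mult.commute)
    also have "Suc (q^2 - 1) = q^2" using q2 by (simp add: power2_eq_square)
    also have "x ^ (q^2) = x" using pow_card_same[of x] card by simp
    finally show ?thesis using that by simp
  qed
  have qq: "(q+1)*(q-1) = q^2 - 1" using q2 by (cases q) (auto simp: power2_eq_square)
  have cardmu: "card (mu (q+1) :: 'a set) = q + 1"
  proof -
    let ?S = "{x::'a. x \<noteq> 0}"
    have cS: "card ?S = (q-1)*(q+1)"
    proof -
      have "?S = UNIV - {0}" by auto
      hence "card ?S = CARD('a) - 1" by (simp add: card_Diff_singleton)
      thus ?thesis using card qq by (simp add: mult.commute)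
    qed
    have "card {x\<in>?S. x ^ (q+1) = 1} = q + 1"
    proof (rule fiber_full[where T = "{y::'a. y ^ (q-1) = 1}" and a = "q-1"])
      show "(\<lambda>x. x ^ (q+1)) ` ?S \<subseteq> {y. y ^ (q-1) = 1}"
      proof
        fix y assume "y \<in> (\<lambda>x. x ^ (q+1)) ` ?S"
        then obtain x where x: "x \<noteq> 0" "y = x ^ (q+1)" by auto
        have "y ^ (q-1) = x ^ ((q+1)*(q-1))" using x by (simp only: power_mult)
        also have "\<dots> = 1" using units[OF x(1)] qq by simp
        finally show "y \<in> {y. y ^ (q-1) = 1}" by simp
      qed
      show "card {y::'a. y ^ (q-1) = 1} \<le> q - 1" using q2 by (intro card_roots_le) simp
      fix y :: 'a
      have "card {x\<in>?S. x ^ (q+1) = y} \<le> card {x. x ^ (q+1) = y}" by (intro card_mono) auto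
      also have "\<dots> \<le> q + 1" by (intro card_roots_le) simp
      finally show "card {x\<in>?S. x ^ (q+1) = y} \<le> q + 1" .
    qed (use cS in auto)
    moreover have "{x\<in>?S. x ^ (q+1) = 1} = mu (q+1)" using xnz by (auto simp: mu_def)
    ultimately show ?thesis by simp
  qed
  have cardA: "card A = m"
  proof -
    have "card {x\<in>mu (q+1). x ^ m = eps ^ k} = m"
    proof (rule fiber_full[where T = "{y::'a. y ^ d = 1}" and a = d])
      show "(\<lambda>x. x ^ m) ` mu (q+1) \<subseteq> {y. y ^ d = 1}"
      proof
        fix y assume "y \<in> (\<lambda>x. x ^ m) ` mu (q+1)"
        then obtain x where x: "x ^ (q+1) = 1" "y = x ^ m" by (auto simp: mu_def)
        have "y ^ d = x ^ (m * d)" using x by (simp only: power_mult)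
        also have "m * d = q + 1" using md by (simp add: mult.commute)
        finally show "y \<in> {y. y ^ d = 1}" using x by simp
      qed
      show "card {y::'a. y ^ d = 1} \<le> d" using d_pos by (intro card_roots_le)
      show "eps ^ k \<in> {y. y ^ d = 1}" proof -
        have "(eps ^ k) ^ d = (eps ^ d) ^ k" by (metis power_mult mult.commute)
        thus ?thesis using eps_ord(1) by simp
      qed
      fix y :: 'a
      have "card {x\<in>mu (q+1). x ^ m = y} \<le> card {x. x ^ m = y}" by (intro card_mono) auto
      also have "\<dots> \<le> m" using m_pos by (intro card_roots_le)
      finally show "card {x\<in>mu (q+1). x ^ m = y} \<le> m" .
    qed (use cardmu md in auto)
    thus ?thesis by (simp add: A_def Aset_def m_def)
  qed
  have Lnz: "L \<noteq> 0" using L0 by auto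
  have c0: "coeff L 0 \<noteq> 0" using L0 by (simp add: poly_0_coeff_0)
  have cT: "coeff L t \<noteq> 0" using Lnz degL by auto
  have qpos: "q > 0" using q2 by simp
  have tq: "coeff (qtilde q L) j = (if j \<le> t then coeff L (t - j) ^ q else 0)" for j
    by (simp add: coeff_qtilde degL)
  have tq0: "coeff (qtilde q L) 0 \<noteq> 0" using cT qpos by (simp add: tq)
  have tqt: "coeff (qtilde q L) t \<noteq> 0" using c0 qpos by (simp add: tq)
  have dqt: "degree (qtilde q L) < m" using degree_qtilde[of q L] degL tm by simp
  have Lx: "poly L x \<noteq> 0" if "x \<in> A" for x using noroot that by (simp add: A_def)
  have ptL: "poly (qtilde q f) x = x ^ degree f * poly f x ^ q" if "x \<in> A" for x f
    using poly_qtilde[OF fr Amem(1)[OF that]] .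
  have lamnz: "lam \<noteq> 0" if "lam \<in> mu (q+1)" for lam :: 'a
    using that xnz by (auto simp: mu_def)
  have coeffL0: "coeff L j = 0" if "j > t" for j using that degL by (simp add: coeff_eq_0)
  have KEY: "coeff (qtilde q L) j = lam * ((if \<tau> \<le> j \<and> j < m then coeff L (j - \<tau>) else 0)
               + eps ^ k * coeff L (j + (m - \<tau>)))"
    if tau: "\<tau> < m" and C: "\<forall>x\<in>A. poly (qtilde q L) x / poly L x = lam * x ^ \<tau>" for \<tau> j lam
  proof -
    define s where "s = m - \<tau>"
    define R where "R = smult lam (monom 1 \<tau> * poly_cutoff s L + smult (eps ^ k) (poly_shift s L))"
    have cR: "coeff R j = lam * ((if \<tau> \<le> j \<and> j < m then coeff L (j - \<tau>) else 0)
               + eps ^ k * coeff L (j + s))" for j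
      using tau by (auto simp: R_def coeff_monom_mult coeff_poly_cutoff coeff_poly_shift s_def)
    have dR: "degree R < m"
    proof -
      have "degree R \<le> m - 1"
        by (rule degree_le) (use tm in \<open>auto simp: cR coeffL0 s_def\<close>)
      thus ?thesis using m_pos by simp
    qed
    have "qtilde q L = R"
    proof (rule poly_eqI_degree[of A])
      fix x assume x: "x \<in> A"
      have "poly (qtilde q L) x = lam * x ^ \<tau> * poly L x"
        using C x Lx[OF x] by (simp add: divide_eq_eq)
      also have "poly L x = poly (poly_cutoff s L) x + x ^ s * poly (poly_shift s L) x"
        by (subst split_poly[of L s]) (simp add: poly_monom)
      also have "x ^ \<tau> * x ^ s = eps ^ k" using Amem(2)[OF x] tau
        by (simp add: s_def flip: power_add)
      hence "lam * x ^ \<tau> * (poly (poly_cutoff s L) x + x ^ s * poly (poly_shift s L) x) = poly R x"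
        by (simp add: R_def poly_monom algebra_simps)
      finally show "poly (qtilde q L) x = poly R x" .
    qed (use cardA dqt dR in auto)
    thus ?thesis by (simp add: cR s_def)
  qed
  have P1: "\<forall>(\<tau>::nat) lam. \<tau> < m \<and> lam \<in> mu (q + 1) \<and>
        (\<forall>x \<in> A. poly (qtilde q L) x / poly L x = lam * x ^ \<tau>)
        \<longrightarrow> \<tau> = 0 \<or> (m - t \<le> \<tau> \<and> \<tau> \<le> t)"
  proof (intro allI impI)
    fix \<tau> :: nat and lam :: 'a
    assume H: "\<tau> < m \<and> lam \<in> mu (q+1) \<and> (\<forall>x\<in>A. poly (qtilde q L) x / poly L x = lam * x ^ \<tau>)"
    show "\<tau> = 0 \<or> (m - t \<le> \<tau> \<and> \<tau> \<le> t)"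
    proof (cases "\<tau> = 0")
      case False
      have K: "coeff (qtilde q L) j = lam * ((if \<tau> \<le> j \<and> j < m then coeff L (j - \<tau>) else 0)
               + eps ^ k * coeff L (j + (m - \<tau>)))" for j using H by (intro KEY) auto
      have "coeff L (m - \<tau>) \<noteq> 0" using K[of 0] tq0 False by auto
      hence "m - \<tau> \<le> t" using degL le_degree by blast
      moreover have "\<tau> \<le> t"
      proof (rule ccontr)
        assume "\<not> \<tau> \<le> t"
        moreover have "coeff L (t + (m - \<tau>)) = 0" using H by (intro coeffL0) auto
        ultimately have "coeff (qtilde q L) t = 0" using K[of t] by simp
        thus False using tqt by simp
      qed
      ultimately show ?thesis by arith
    qed simp
  qed
  have P2: "\<forall>lam \<in> mu (q + 1).
        (\<forall>x \<in> A. poly (qtilde q L) x / poly L x = lam)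
        \<longleftrightarrow> qtilde q L = smult lam L"
  proof (intro ballI)
    fix lam :: 'a assume lam: "lam \<in> mu (q+1)"
    show "(\<forall>x\<in>A. poly (qtilde q L) x / poly L x = lam) \<longleftrightarrow> qtilde q L = smult lam L"
    proof
      assume C: "\<forall>x\<in>A. poly (qtilde q L) x / poly L x = lam"
      show "qtilde q L = smult lam L"
      proof (rule poly_eqI_degree[of A])
        fix x assume x: "x \<in> A"
        show "poly (qtilde q L) x = poly (smult lam L) x"
          using C x Lx[OF x] by (simp add: divide_eq_eq)
      qed (use cardA dqt degL tm degree_smult_le[of lam L] in auto)
    next
      assume "qtilde q L = smult lam L"
      thus "\<forall>x\<in>A. poly (qtilde q L) x / poly L x = lam" using Lx by simp
    qed
  qed
  have P3: "\<forall>lam \<in> mu (q + 1). \<forall>\<tau>::nat. m - t \<le> \<tau> \<and> \<tau> \<le> t \<longrightarrow>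
        ((\<forall>x \<in> A. poly (qtilde q L) x / poly L x = lam * x ^ \<tau>)
         \<longleftrightarrow> (\<exists>P Q. L = P + monom 1 (m - \<tau>) * Q
               \<and> degree P = t - \<tau> \<and> qtilde q P = smult lam P
               \<and> degree Q = \<tau> + t - m
               \<and> qtilde q Q = smult (lam * eps ^ k) Q))"
  proof (intro ballI allI impI)
    fix lam :: 'a and \<tau> :: nat
    assume lam: "lam \<in> mu (q+1)" and T: "m - t \<le> \<tau> \<and> \<tau> \<le> t"
    have lnz: "lam \<noteq> 0" using lamnz lam by blast
    have taum: "\<tau> < m" using T tm by simp
    define s where "s = m - \<tau>"
    have s_t: "s \<le> t" "t - \<tau> < s" "\<tau> + s = m" using T tm by (auto simp: s_def)
    show "(\<forall>x\<in>A. poly (qtilde q L) x / poly L x = lam * x ^ \<tau>) \<longleftrightarrow>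
          (\<exists>P Q. L = P + monom 1 (m - \<tau>) * Q \<and> degree P = t - \<tau> \<and> qtilde q P = smult lam P \<and>
             degree Q = \<tau> + t - m \<and> qtilde q Q = smult (lam * eps ^ k) Q)"
      unfolding s_def[symmetric]
    proof
      assume C: "\<forall>x\<in>A. poly (qtilde q L) x / poly L x = lam * x ^ \<tau>"
      have K: "coeff (qtilde q L) j = lam * ((if \<tau> \<le> j \<and> j < m then coeff L (j - \<tau>) else 0)
               + eps ^ k * coeff L (j + s))" for j using KEY[OF taum C] by (simp add: s_def)
      have Kl: "coeff (qtilde q L) (i + \<tau>) = lam * coeff L i" if "i < s" for i
        using K[of "i + \<tau>"] that coeffL0[of "i + \<tau> + s"] s_t tm by auto
      have Kh: "coeff (qtilde q L) j = lam * eps ^ k * coeff L (j + s)" if "j < \<tau>" for j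
        using K[of j] that by (simp add: algebra_simps)
      define P where "P = poly_cutoff s L"
      define Q where "Q = poly_shift s L"
      have cP: "coeff P i = (if i < s then coeff L i else 0)" for i by (simp add: P_def coeff_poly_cutoff)
      have cQ: "coeff Q i = coeff L (i + s)" for i by (simp add: Q_def coeff_poly_shift)
      have cP0: "coeff P i = 0" if "i > t - \<tau>" for i
      proof (cases "i < s")
        case True
        have "coeff (qtilde q L) (i + \<tau>) = 0" using that T by (simp add: tq)
        thus ?thesis using Kl[OF True] lnz True by (simp add: cP)
      qed (simp add: cP)
      have dP: "degree P = t - \<tau>"
      proof (rule antisym)
        show "degree P \<le> t - \<tau>" by (rule degree_le) (use cP0 in auto)
        have "coeff (qtilde q L) (t - \<tau> + \<tau>) \<noteq> 0" using tqt T by simp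
        hence "coeff P (t - \<tau>) \<noteq> 0" using Kl[OF s_t(2)] s_t by (simp add: cP)
        thus "t - \<tau> \<le> degree P" by (rule le_degree)
      qed
      have dQ: "degree Q = \<tau> + t - m"
      proof (rule antisym)
        show "degree Q \<le> \<tau> + t - m" by (rule degree_le) (use s_t in \<open>auto simp: cQ coeffL0\<close>)
        have "\<tau> + t - m + s = t" using s_t by arith
        hence "coeff Q (\<tau> + t - m) \<noteq> 0" using cT by (simp add: cQ)
        thus "\<tau> + t - m \<le> degree Q" by (rule le_degree)
      qed
      show "\<exists>P Q. L = P + monom 1 s * Q \<and> degree P = t - \<tau> \<and> qtilde q P = smult lam P \<and>
             degree Q = \<tau> + t - m \<and> qtilde q Q = smult (lam * eps ^ k) Q"
      proof (intro exI conjI)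
        show "L = P + monom 1 s * Q" unfolding P_def Q_def by (rule split_poly)
        show "degree P = t - \<tau>" by (rule dP)
        show "degree Q = \<tau> + t - m" by (rule dQ)
        show "qtilde q P = smult lam P"
        proof (rule poly_eqI)
          fix j
          show "coeff (qtilde q P) j = coeff (smult lam P) j"
          proof (cases "j \<le> t - \<tau>")
            case True
            have A1: "coeff (qtilde q L) (j + \<tau>) = lam * coeff L j" using Kl True s_t by simp
            have A2: "coeff (qtilde q L) (j + \<tau>) = coeff L (t - \<tau> - j) ^ q"
            proof -
              have e: "j + \<tau> \<le> t" "t - (j + \<tau>) = t - \<tau> - j" using True T by auto
              show ?thesis unfolding tq using e by simp
            qed
            have X: "coeff L (t - \<tau> - j) ^ q = lam * coeff L j" using A1 A2 by metis
            have lt: "t - \<tau> - j < s" "j < s" using True s_t by auto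
            have "coeff (qtilde q P) j = coeff P (t - \<tau> - j) ^ q" using True by (simp add: coeff_qtilde dP)
            also have "\<dots> = coeff L (t - \<tau> - j) ^ q" using lt by (simp add: cP)
            also have "\<dots> = lam * coeff L j" by (rule X)
            also have "\<dots> = coeff (smult lam P) j" using lt by (simp add: cP)
            finally show ?thesis .
          next
            case False
            have "coeff (qtilde q P) j = 0" using False by (simp add: coeff_qtilde dP)
            moreover have "coeff P j = 0" using False by (intro cP0) simp
            ultimately show ?thesis by simp
          qed
        qed
        show "qtilde q Q = smult (lam * eps ^ k) Q"
        proof (rule poly_eqI)
          fix j
          show "coeff (qtilde q Q) j = coeff (smult (lam * eps ^ k) Q) j"
          proof (cases "j \<le> \<tau> + t - m")
            case True
            hence "j < \<tau>" using tm T by arith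
            hence A1: "coeff (qtilde q L) j = lam * eps ^ k * coeff L (j + s)" by (rule Kh)
            have jt: "j \<le> t" using True taum by arith
            have A2: "coeff (qtilde q L) j = coeff L (t - j) ^ q" using jt by (simp add: tq)
            have e: "\<tau> + t - m - j + s = t - j" using True s_t by simp
            have "coeff (qtilde q Q) j = coeff Q (\<tau> + t - m - j) ^ q" using True by (simp add: coeff_qtilde dQ)
            also have "\<dots> = coeff L (t - j) ^ q" by (simp only: cQ e)
            also have "\<dots> = lam * eps ^ k * coeff L (j + s)" using A1 A2 by metis
            also have "\<dots> = coeff (smult (lam * eps ^ k) Q) j" by (simp add: cQ)
            finally show ?thesis .
          next
            case False
            have "j + s > t" using False s_t by arith
            hence "coeff Q j = 0" by (simp add: cQ coeffL0)
            moreover have "coeff (qtilde q Q) j = 0" using False by (simp add: coeff_qtilde dQ)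
            ultimately show ?thesis by simp
          qed
        qed
      qed
    next
      assume "\<exists>P Q. L = P + monom 1 s * Q \<and> degree P = t - \<tau> \<and> qtilde q P = smult lam P \<and>
             degree Q = \<tau> + t - m \<and> qtilde q Q = smult (lam * eps ^ k) Q"
      then obtain P Q where LPQ: "L = P + monom 1 s * Q" and dP: "degree P = t - \<tau>"
        and tP: "qtilde q P = smult lam P" and dQ: "degree Q = \<tau> + t - m"
        and tQ: "qtilde q Q = smult (lam * eps ^ k) Q" by blast
      show "\<forall>x\<in>A. poly (qtilde q L) x / poly L x = lam * x ^ \<tau>"
      proof
        fix x assume x: "x \<in> A"
        have hP: "x ^ (t - \<tau>) * poly P x ^ q = lam * poly P x"
          using ptL[OF x, of P] tP dP by simp
        have hQ: "x ^ (\<tau> + t - m) * poly Q x ^ q = lam * eps ^ k * poly Q x"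
          using ptL[OF x, of Q] tQ dQ by simp
        have Lx': "poly L x = poly P x + x ^ s * poly Q x" using LPQ by (simp add: poly_monom)
        have e1: "x ^ t = x ^ \<tau> * x ^ (t - \<tau>)" using T by (simp flip: power_add)
        have x1: "x ^ (s * (q + 1)) = 1" using Amem(1)[OF x] by (metis power_mult mult.commute power_one)
        have e2: "x ^ t * (x ^ s) ^ q = x ^ (\<tau> + t - m)"
        proof -
          have eq: "t + s * q = (\<tau> + t - m) + s * (q + 1)" using s_t by (simp add: algebra_simps)
          have "x ^ t * (x ^ s) ^ q = x ^ (t + s * q)" by (simp add: power_add power_mult)
          also have "\<dots> = x ^ ((\<tau> + t - m) + s * (q + 1))" by (simp only: eq)
          also have "\<dots> = x ^ (\<tau> + t - m) * x ^ (s * (q + 1))" by (simp only: power_add)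
          finally show ?thesis using x1 by simp
        qed
        have e3: "x ^ \<tau> * x ^ s = eps ^ k" using Amem(2)[OF x] s_t by (simp flip: power_add)
        have "poly (qtilde q L) x = x ^ t * poly L x ^ q" using ptL[OF x, of L] degL by simp
        also have "\<dots> = x ^ t * (poly P x ^ q + (x ^ s) ^ q * poly Q x ^ q)"
          using Lx' frob_add[OF fr] by (simp add: power_mult_distrib)
        also have "\<dots> = x ^ \<tau> * (x ^ (t - \<tau>) * poly P x ^ q) + (x ^ t * (x ^ s) ^ q) * poly Q x ^ q"
          using e1 by (simp add: algebra_simps)
        also have "\<dots> = lam * x ^ \<tau> * poly L x"
          unfolding hP e2 hQ Lx' using e3 by (simp add: algebra_simps)
        finally show "poly (qtilde q L) x / poly L x = lam * x ^ \<tau>" using Lx[OF x] by simp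
      qed
    qed
  qed
  show ?thesis
    unfolding m_def[symmetric] A_def[symmetric] by (rule conjI[OF P1 conjI[OF P2 P3]])
qed

end
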